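(* Fix a scenario $v$, costs $c_i>0$, and let $\beta_i=c_i+v_i$. For each box $i\in[n]$ consider two Poisson processes of arrivals of box $i$, a good one with rate $\lambda_i^g(\tau)\ge 0$ and a bad one with rate $\lambda_i^b(\tau)\ge 0$ at time $\tau>0$, all $2n$ processes mutually independent. Suppose $$\sum_{i\in[n]}\lambda_i^g(\tau)\le\frac{2}{\tau}\quad\text{for all }\tau>0.$$ For a given arrival process, let $\alpha_i$ be the first arrival time of box $i$, $\tau_i=\max\{\alpha_i,\beta_i\}$, $\tau^*=\min_i\tau_i$, $i^*=\arg\min_i\tau_i$, and $Q=\tau^*+\beta_{i^*}$. Let $Q^{g+b}$ be this quantity when arrivals of box $i$ are those of both its good and bad processes combined, and $Q^{g}$ the quantity when only the good arrivals are used. Then $\mathbf{E}[Q^{g+b}]\le\mathbf{E}[Q^{g}]$.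
   Context: Ties among arrival/stopping times are zero-probability events and are ignored. The quantity $\tau^*+\beta_{i^*}$ is the upper bound on the expected objective of the Balanced Stopping rule (which stops at time $\tau^*$ and takes box $i^*$) for the Correlated Pandora's Problem, where box $i$ has opening cost $c_i$ and volume $v_i$. *)

theory Defs
  imports "HOL-Probability.Probability"
begin

definition cum_rate :: "(real \<Rightarrow> real) \<Rightarrow> real \<Rightarrow> ennreal" where
  "cum_rate lam t = (\<integral>\<^sup>+ s. ennreal (lam s) * indicator {0<..t} s \<partial>lborel)"

definition exp_neg :: "ennreal \<Rightarrow> ennreal" where
  "exp_neg L = (if L = \<infinity> then 0 else ennreal (exp (- enn2real L)))"

text \<open>X (with values in [0, infinity]; infinity = no arrival) is distributed as the first
  arrival time of a Poisson process on (0, infinity) with rate function lam.\<close>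
definition first_arrival_time :: "'a measure \<Rightarrow> (real \<Rightarrow> real) \<Rightarrow> ('a \<Rightarrow> ennreal) \<Rightarrow> bool" where
  "first_arrival_time M lam X \<longleftrightarrow> X \<in> borel_measurable M \<and>
     (\<forall>t>0. emeasure M {\<omega> \<in> space M. ennreal t < X \<omega>} = exp_neg (cum_rate lam t))"

definition rate_fun :: "(real \<Rightarrow> real) \<Rightarrow> bool" where
  "rate_fun lam \<longleftrightarrow> lam \<in> borel_measurable borel \<and> (\<forall>t>0. lam t \<ge> 0) \<and>
     (\<forall>a b. 0 < a \<longrightarrow> a \<le> b \<longrightarrow> set_integrable lborel {a..b} lam)"

definition stop_Q :: "nat \<Rightarrow> (nat \<Rightarrow> real) \<Rightarrow> (nat \<Rightarrow> ennreal) \<Rightarrow> ennreal" where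
  "stop_Q n \<beta> \<alpha> =
     (let \<tau> = (\<lambda>i. max (\<alpha> i) (ennreal (\<beta> i)));
          istar = arg_min_on \<tau> {..<n}
      in \<tau> istar + ennreal (\<beta> istar))"

end

theory Submission
  imports Defs
begin


definition tauv :: "(nat \<Rightarrow> real) \<Rightarrow> (nat \<Rightarrow> ennreal) \<Rightarrow> nat \<Rightarrow> ennreal" where
  "tauv \<beta> \<alpha> i = max (\<alpha> i) (ennreal (\<beta> i))"

definition istar :: "nat \<Rightarrow> (nat \<Rightarrow> real) \<Rightarrow> (nat \<Rightarrow> ennreal) \<Rightarrow> nat" where
  "istar n \<beta> \<alpha> = arg_min_on (tauv \<beta> \<alpha>) {..<n}"

lemma stop_Q_alt: "stop_Q n \<beta> \<alpha> = tauv \<beta> \<alpha> (istar n \<beta> \<alpha>) + ennreal (\<beta> (istar n \<beta> \<alpha>))"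
  unfolding stop_Q_def istar_def Let_def tauv_def[abs_def] by simp

lemma istar_props:
  assumes "n \<ge> 1"
  shows "istar n \<beta> \<alpha> < n" "\<And>j. j < n \<Longrightarrow> tauv \<beta> \<alpha> (istar n \<beta> \<alpha>) \<le> tauv \<beta> \<alpha> j"
proof -
  have ne: "{..<n} \<noteq> {}" using assms by (simp add: lessThan_empty_iff)
  show "istar n \<beta> \<alpha> < n" using arg_min_if_finite(1)[OF finite_lessThan ne, of "tauv \<beta> \<alpha>"]
    by (simp add: istar_def)
  show "\<And>j. j < n \<Longrightarrow> tauv \<beta> \<alpha> (istar n \<beta> \<alpha>) \<le> tauv \<beta> \<alpha> j"
    using arg_min_least[OF _ ne, of _ "tauv \<beta> \<alpha>"] by (simp add: istar_def)
qed

lemma istar_eq_SOME: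
  "istar n \<beta> \<alpha> = (SOME y. y \<in> {y. y < n \<and> tauv \<beta> \<alpha> y = Min (tauv \<beta> \<alpha> ` {..<n})})"
  unfolding istar_def by (subst arg_min_SOME_Min) auto

lemma istar_cong:
  assumes "\<And>i. i < n \<Longrightarrow> tauv \<beta> \<alpha> i = tauv \<beta> \<alpha>' i"
  shows "istar n \<beta> \<alpha> = istar n \<beta> \<alpha>'"
proof -
  have "tauv \<beta> \<alpha> ` {..<n} = tauv \<beta> \<alpha>' ` {..<n}" using assms by (auto intro!: image_cong)
  then have "{y. y < n \<and> tauv \<beta> \<alpha> y = Min (tauv \<beta> \<alpha> ` {..<n})} = {y. y < n \<and> tauv \<beta> \<alpha>' y = Min (tauv \<beta> \<alpha>' ` {..<n})}"
    using assms by auto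
  then show ?thesis unfolding istar_eq_SOME by simp
qed

lemma stop_Q_cong:
  assumes "\<And>i. i < n \<Longrightarrow> \<alpha> i = \<alpha>' i" "n \<ge> 1"
  shows "stop_Q n \<beta> \<alpha> = stop_Q n \<beta> \<alpha>'"
proof -
  have e: "istar n \<beta> \<alpha> = istar n \<beta> \<alpha>'" using assms by (intro istar_cong) (auto simp: tauv_def)
  have "\<alpha> (istar n \<beta> \<alpha>') = \<alpha>' (istar n \<beta> \<alpha>')" using assms(1) istar_props(1)[OF assms(2), of \<beta> \<alpha>'] by simp
  then show ?thesis unfolding stop_Q_alt e by (simp add: tauv_def)
qed

lemma istar_measurable:
  assumes "n \<ge> 1" and meas: "\<And>i. i < n \<Longrightarrow> (\<lambda>\<omega>. \<alpha> i \<omega>) \<in> borel_measurable N"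
  shows "(\<lambda>\<omega>. istar n \<beta> (\<lambda>i. \<alpha> i \<omega>)) \<in> measurable N (count_space {..<n})"
  unfolding measurable_count_space_eq2_countable
proof (intro conjI ballI)
  show "(\<lambda>\<omega>. istar n \<beta> (\<lambda>i. \<alpha> i \<omega>)) \<in> space N \<rightarrow> {..<n}" using istar_props(1)[OF assms(1)] by auto
next
  fix k assume "k \<in> {..<n}"
  define T where "T \<omega> = {y. y < n \<and> tauv \<beta> (\<lambda>i. \<alpha> i \<omega>) y = Min (tauv \<beta> (\<lambda>i. \<alpha> i \<omega>) ` {..<n})}" for \<omega>
  have tm: "(\<lambda>\<omega>. tauv \<beta> (\<lambda>i. \<alpha> i \<omega>) y) \<in> borel_measurable N" if "y < n" for y
    unfolding tauv_def using meas[OF that] by measurable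
  have mm: "(\<lambda>\<omega>. Min (tauv \<beta> (\<lambda>i. \<alpha> i \<omega>) ` {..<n})) \<in> borel_measurable N"
    using tm by (intro borel_measurable_Min) auto
  have "(\<lambda>\<omega>. istar n \<beta> (\<lambda>i. \<alpha> i \<omega>)) -` {k} \<inter> space N =
     {\<omega> \<in> space N. \<exists>S \<in> Pow {..<n}. (SOME y. y \<in> S) = k \<and> (\<forall>y\<in>{..<n}. (y \<in> S \<longleftrightarrow> tauv \<beta> (\<lambda>i. \<alpha> i \<omega>) y = Min (tauv \<beta> (\<lambda>i. \<alpha> i \<omega>) ` {..<n})))}"
    (is "?L = ?R")
  proof -
    have "istar n \<beta> (\<lambda>i. \<alpha> i \<omega>) = k \<longleftrightarrow> (\<exists>S \<in> Pow {..<n}. (SOME y. y \<in> S) = k \<and> (\<forall>y\<in>{..<n}. (y \<in> S \<longleftrightarrow> tauv \<beta> (\<lambda>i. \<alpha> i \<omega>) y = Min (tauv \<beta> (\<lambda>i. \<alpha> i \<omega>) ` {..<n}))))" for \<omega>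
    proof
      assume "istar n \<beta> (\<lambda>i. \<alpha> i \<omega>) = k"
      then show "\<exists>S \<in> Pow {..<n}. (SOME y. y \<in> S) = k \<and> (\<forall>y\<in>{..<n}. (y \<in> S \<longleftrightarrow> tauv \<beta> (\<lambda>i. \<alpha> i \<omega>) y = Min (tauv \<beta> (\<lambda>i. \<alpha> i \<omega>) ` {..<n})))"
        by (intro bexI[of _ "T \<omega>"]) (auto simp: T_def istar_eq_SOME)
    next
      assume "\<exists>S \<in> Pow {..<n}. (SOME y. y \<in> S) = k \<and> (\<forall>y\<in>{..<n}. (y \<in> S \<longleftrightarrow> tauv \<beta> (\<lambda>i. \<alpha> i \<omega>) y = Min (tauv \<beta> (\<lambda>i. \<alpha> i \<omega>) ` {..<n})))"
      then obtain S where S: "S \<in> Pow {..<n}" "(SOME y. y \<in> S) = k"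
        "\<forall>y\<in>{..<n}. (y \<in> S \<longleftrightarrow> tauv \<beta> (\<lambda>i. \<alpha> i \<omega>) y = Min (tauv \<beta> (\<lambda>i. \<alpha> i \<omega>) ` {..<n}))"
        by blast
      then have "S = T \<omega>" by (auto simp: T_def)
      then show "istar n \<beta> (\<lambda>i. \<alpha> i \<omega>) = k" using S(2)
        by (simp add: istar_eq_SOME T_def)
    qed
    then show ?thesis by auto
  qed
  also have "?R \<in> sets N"
    using tm mm by measurable
  finally show "(\<lambda>\<omega>. istar n \<beta> (\<lambda>i. \<alpha> i \<omega>)) -` {k} \<inter> space N \<in> sets N" .
qed

lemma stop_Q_measurable:
  assumes "n \<ge> 1" and meas: "\<And>i. i < n \<Longrightarrow> (\<lambda>\<omega>. \<alpha> i \<omega>) \<in> borel_measurable N"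
  shows "(\<lambda>\<omega>. stop_Q n \<beta> (\<lambda>i. \<alpha> i \<omega>)) \<in> borel_measurable N"
  unfolding stop_Q_alt
proof (rule measurable_compose_countable'[where f="\<lambda>k \<omega>. tauv \<beta> (\<lambda>i. \<alpha> i \<omega>) k + ennreal (\<beta> k)"])
  show "(\<lambda>\<omega>. tauv \<beta> (\<lambda>i. \<alpha> i \<omega>) k + ennreal (\<beta> k)) \<in> borel_measurable N" if "k \<in> {..<n}" for k
  proof -
    have [measurable]: "(\<lambda>\<omega>. \<alpha> k \<omega>) \<in> borel_measurable N" using meas that by simp
    show ?thesis unfolding tauv_def by measurable
  qed
qed (use istar_measurable[OF assms] in auto)



lemma exp_neg_ennreal: "r \<ge> 0 \<Longrightarrow> exp_neg (ennreal r) = ennreal (exp (- r))"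
  by (simp add: exp_neg_def)

lemma exp_neg_add: "exp_neg (a + b) = exp_neg a * exp_neg b"
proof (cases "a = \<infinity> \<or> b = \<infinity>")
  case True then show ?thesis by (auto simp: exp_neg_def)
next
  case False
  then obtain a' b' where ab: "a = ennreal a'" "b = ennreal b'" "a' \<ge> 0" "b' \<ge> 0"
    by (cases a rule: ennreal_cases; cases b rule: ennreal_cases) auto
  then show ?thesis
  proof -
    have e: "a + b = ennreal (a' + b')" using ab by (simp add: ennreal_plus)
    have "exp (- (a' + b')) = exp (- a') * exp (- b')" by (simp add: exp_add[symmetric])
    then have "exp_neg (ennreal (a' + b')) = exp_neg (ennreal a') * exp_neg (ennreal b')"
      using ab by (simp add: exp_neg_ennreal ennreal_mult del: ennreal_plus)
    then show ?thesis using ab e by simp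
  qed
qed

lemma exp_neg_mono: assumes "a \<le> b" shows "exp_neg b \<le> exp_neg a"
proof (cases "b = \<infinity>")
  case True then show ?thesis by (simp add: exp_neg_def)
next
  case False
  then have "a \<noteq> \<infinity>" using assms by (auto simp: top_unique)
  then obtain a' b' where ab: "a = ennreal a'" "b = ennreal b'" "a' \<ge> 0" "b' \<ge> 0"
    using False by (cases a rule: ennreal_cases; cases b rule: ennreal_cases) auto
  then have "a' \<le> b'" using assms by simp
  then show ?thesis using ab by (simp add: exp_neg_def)
qed

lemma exp_neg_le1: "exp_neg a \<le> 1"
proof -
  have "exp_neg a \<le> exp_neg 0" by (rule exp_neg_mono) simp
  then show ?thesis by (simp add: exp_neg_def)
qed

lemma exp_neg_ge: assumes "a \<le> ennreal r" "r \<ge> 0" shows "ennreal (exp (- r)) \<le> exp_neg a"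
  using exp_neg_mono[OF assms(1)] assms(2) by (simp add: exp_neg_ennreal)

definition Jint :: "(real \<Rightarrow> real) \<Rightarrow> real \<Rightarrow> real \<Rightarrow> ennreal" where
  "Jint lam a c = (\<integral>\<^sup>+ s. ennreal (lam s) * indicator {a<..c} s \<partial>lborel)"

lemma cum_rate_split:
  assumes [measurable]: "lam \<in> borel_measurable borel" and "0 \<le> a" "a \<le> c"
  shows "cum_rate lam c = cum_rate lam a + Jint lam a c"
proof -
  have "(\<lambda>s. ennreal (lam s) * indicator {0<..c} s) = (\<lambda>s. ennreal (lam s) * indicator {0<..a} s + ennreal (lam s) * indicator {a<..c} s)"
    using assms by (auto simp: fun_eq_iff indicator_def)
  then show ?thesis unfolding cum_rate_def Jint_def
    by (simp add: nn_integral_add)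
qed

lemma Jint_mono:
  assumes "a \<le> a'" "c' \<le> c" shows "Jint lam a' c' \<le> Jint lam a c"
  unfolding Jint_def using assms
  by (intro nn_integral_mono) (auto simp: indicator_def)

lemma Jint_sum_bound:
  assumes meas: "\<And>i. i \<in> I \<Longrightarrow> lam i \<in> borel_measurable borel"
    and nonneg: "\<And>i t. i \<in> I \<Longrightarrow> t > 0 \<Longrightarrow> lam i t \<ge> 0"
    and bnd: "\<And>t. t > 0 \<Longrightarrow> (\<Sum>i\<in>I. lam i t) \<le> 2 / t"
    and a: "0 < a" "a \<le> c"
  shows "(\<Sum>i\<in>I. Jint (lam i) a c) \<le> ennreal (2 * ln c - 2 * ln a)"
proof -
  have "(\<Sum>i\<in>I. Jint (lam i) a c) = (\<integral>\<^sup>+ s. (\<Sum>i\<in>I. ennreal (lam i s) * indicator {a<..c} s) \<partial>lborel)"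
    unfolding Jint_def using meas by (subst nn_integral_sum) auto
  also have "\<dots> \<le> (\<integral>\<^sup>+ s. ennreal (2 / s) * indicator {a..c} s \<partial>lborel)"
  proof (intro nn_integral_mono)
    fix s :: real
    show "(\<Sum>i\<in>I. ennreal (lam i s) * indicator {a<..c} s) \<le> ennreal (2 / s) * indicator {a..c} s"
    proof (cases "s \<in> {a<..c}")
      case True
      then have "s > 0" using a by auto
      then have "(\<Sum>i\<in>I. ennreal (lam i s) * indicator {a<..c} s) = ennreal (\<Sum>i\<in>I. lam i s)"
        using True nonneg by (simp add: sum_ennreal)
      also have "\<dots> \<le> ennreal (2 / s)" using bnd[OF \<open>s > 0\<close>] by (rule ennreal_leI)
      finally show ?thesis using True by (simp add: indicator_def)
    qed (simp add: indicator_def)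
  qed
  also have "\<dots> = ennreal (2 * ln c - 2 * ln a)"
  proof (rule nn_integral_FTC_Icc)
    show "(\<lambda>s::real. 2 / s) \<in> borel_measurable borel" by measurable
    show "DERIV (\<lambda>s. 2 * ln s) x :> 2 / x" if "x \<in> {a..c}" for x
      using that a by (auto intro!: derivative_eq_intros)
    show "0 \<le> 2 / x" if "x \<in> {a..c}" for x using that a by auto
  qed fact
  finally show ?thesis .
qed

lemma exp_neg_Jint_bound:
  assumes "J \<le> ennreal (2 * ln c - 2 * ln a)" "0 < a" "a \<le> c"
  shows "ennreal ((a / c)\<^sup>2) \<le> exp_neg J"
proof -
  have "2 * ln c - 2 * ln a \<ge> 0" using assms by auto
  from exp_neg_ge[OF assms(1) this] have "ennreal (exp (- (2 * ln c - 2 * ln a))) \<le> exp_neg J" .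
  moreover have "exp (- (2 * ln c - 2 * ln a)) = (a / c)\<^sup>2"
  proof -
    have "- (2 * ln c - 2 * ln a) = ln ((a / c)\<^sup>2)"
      using assms by (simp add: ln_realpow ln_div)
    then show ?thesis using assms by simp
  qed
  ultimately show ?thesis by simp
qed



lemma Ico_bound:
  fixes D :: real and m :: ennreal
  assumes "ennreal D \<le> m" "0 \<le> D"
  shows "ennreal D + emeasure lborel {s. D \<le> s \<and> ennreal s < m} \<le> m"
proof (cases m rule: ennreal_cases)
  case (real r)
  then have "{s. D \<le> s \<and> ennreal s < m} = {D..<r}" using assms
    by (auto simp: ennreal_less_iff)
  moreover have "D \<le> r" using assms real by simp
  ultimately show ?thesis using real assms by (simp add: ennreal_plus[symmetric] del: ennreal_plus)
qed simp

locale core = prob_space M for M :: "'a measure" +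
  fixes n :: nat and \<beta> :: "nat \<Rightarrow> real" and lam :: "nat \<Rightarrow> real \<Rightarrow> real"
    and \<alpha>g :: "nat \<Rightarrow> 'a \<Rightarrow> ennreal"
  assumes n1: "n \<ge> 1" and \<beta>pos: "\<And>i. i < n \<Longrightarrow> \<beta> i > 0"
    and rate: "\<And>i. i < n \<Longrightarrow> rate_fun (lam i)"
    and fat: "\<And>i. i < n \<Longrightarrow> first_arrival_time M (lam i) (\<alpha>g i)"
    and sumrate: "\<And>t. t > 0 \<Longrightarrow> (\<Sum>i<n. lam i t) \<le> 2 / t"
    and indepP: "\<And>B. (\<And>i. i < n \<Longrightarrow> B i \<in> sets borel) \<Longrightarrow>
        prob (\<Inter>i\<in>{..<n}. \<alpha>g i -` B i \<inter> space M) = (\<Prod>i<n. prob (\<alpha>g i -` B i \<inter> space M))"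
begin

lemma meas_\<alpha>: "i < n \<Longrightarrow> \<alpha>g i \<in> borel_measurable M"
  using fat by (simp add: first_arrival_time_def)

lemma lam_meas: "i < n \<Longrightarrow> lam i \<in> borel_measurable borel"
  using rate by (simp add: rate_fun_def)

lemma lam_nonneg: "i < n \<Longrightarrow> t > 0 \<Longrightarrow> lam i t \<ge> 0"
  using rate by (simp add: rate_fun_def)

lemma surv: "i < n \<Longrightarrow> t > 0 \<Longrightarrow> emeasure M {\<omega> \<in> space M. ennreal t < \<alpha>g i \<omega>} = exp_neg (cum_rate (lam i) t)"
  using fat by (simp add: first_arrival_time_def)

lemma surv_step:
  assumes "i < n" "0 < a" "a \<le> c"
  shows "emeasure M {\<omega> \<in> space M. ennreal c < \<alpha>g i \<omega>} = exp_neg (Jint (lam i) a c) * emeasure M {\<omega> \<in> space M. ennreal a < \<alpha>g i \<omega>}"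
  using assms surv[of i a] surv[of i c] cum_rate_split[OF lam_meas[OF assms(1)], of a c]
  by (simp add: exp_neg_add mult.commute)

lemma rect:
  assumes "\<And>i. i < n \<Longrightarrow> B i \<in> sets borel"
  shows "emeasure M {\<omega> \<in> space M. \<forall>i<n. \<alpha>g i \<omega> \<in> B i} = (\<Prod>i<n. emeasure M {\<omega> \<in> space M. \<alpha>g i \<omega> \<in> B i})"
proof -
  have ne: "{..<n} \<noteq> {}" using n1 by (simp add: lessThan_empty_iff)
  have "{\<omega> \<in> space M. \<forall>i<n. \<alpha>g i \<omega> \<in> B i} = (\<Inter>i\<in>{..<n}. \<alpha>g i -` B i \<inter> space M)"
    using ne by auto
  then have "prob {\<omega> \<in> space M. \<forall>i<n. \<alpha>g i \<omega> \<in> B i} = (\<Prod>i<n. prob (\<alpha>g i -` B i \<inter> space M))"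
    using indepP[of B] assms by simp
  moreover have "\<alpha>g i -` B i \<inter> space M = {\<omega> \<in> space M. \<alpha>g i \<omega> \<in> B i}" for i by auto
  ultimately show ?thesis
    by (simp add: emeasure_eq_measure prod_ennreal)
qed

end

lemma exp_neg_zero: "exp_neg 0 = 1"
  by (simp add: exp_neg_def)

lemma exp_neg_sum: "finite I \<Longrightarrow> exp_neg (\<Sum>i\<in>I. f i) = (\<Prod>i\<in>I. exp_neg (f i))"
  by (induction I rule: finite_induct) (simp_all add: exp_neg_zero exp_neg_add)

lemma Jint_empty: "c \<le> a \<Longrightarrow> Jint lam a c = 0"
  unfolding Jint_def by (simp add: indicator_def)

locale coreD = core +
  fixes Dr :: real
  assumes Dr_pos: "Dr > 0"
begin

definition memB :: "nat set \<Rightarrow> nat \<Rightarrow> ennreal \<Rightarrow> bool" where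
  "memB A i x = (if \<beta> i < Dr then ennreal Dr \<le> x else if i \<in> A then x \<le> ennreal (\<beta> i) else ennreal (\<beta> i) < x)"

definition memB' :: "nat set \<Rightarrow> real \<Rightarrow> nat \<Rightarrow> ennreal \<Rightarrow> bool" where
  "memB' A s i x = (if \<beta> i < Dr then ennreal s < x else if i \<in> A then x \<le> ennreal (\<beta> i) else ennreal (max (\<beta> i) s) < x)"

definition F :: "nat set \<Rightarrow> 'a set" where
  "F A = {\<omega> \<in> space M. \<forall>i<n. memB A i (\<alpha>g i \<omega>)}"

definition G :: "nat set \<Rightarrow> real \<Rightarrow> 'a set" where
  "G A s = {\<omega> \<in> space M. \<forall>i<n. memB' A s i (\<alpha>g i \<omega>)}"

lemma memB_sets: "{x. memB A i x} \<in> sets borel"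
proof -
  have "{x. memB A i x} = {x \<in> space borel. memB A i x}" by simp
  also have "\<dots> \<in> sets borel" unfolding memB_def by measurable
  finally show ?thesis .
qed

lemma memB'_sets: "{x. memB' A s i x} \<in> sets borel"
proof -
  have "{x. memB' A s i x} = {x \<in> space borel. memB' A s i x}" by simp
  also have "\<dots> \<in> sets borel" unfolding memB'_def by measurable
  finally show ?thesis .
qed

lemma set_less_sets: "i < n \<Longrightarrow> {\<omega> \<in> space M. ennreal a < \<alpha>g i \<omega>} \<in> sets M"
  using meas_\<alpha>[of i] by measurable

lemma factor:
  assumes i: "i < n" and A: "\<And>j. j \<in> A \<Longrightarrow> Dr \<le> \<beta> j" and s: "Dr \<le> s" and t: "0 < t" "t < 1"
  shows "exp_neg (Jint (lam i) (t * Dr) s) * emeasure M {\<omega> \<in> space M. memB A i (\<alpha>g i \<omega>)}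
     \<le> emeasure M {\<omega> \<in> space M. memB' A s i (\<alpha>g i \<omega>)}"
proof -
  have tD: "0 < t * Dr" "t * Dr < Dr" using t Dr_pos by auto
  show ?thesis
  proof (cases "\<beta> i < Dr")
    case True
    have "emeasure M {\<omega> \<in> space M. memB A i (\<alpha>g i \<omega>)} \<le> emeasure M {\<omega> \<in> space M. ennreal (t * Dr) < \<alpha>g i \<omega>}"
    proof (rule emeasure_mono)
      show "{\<omega> \<in> space M. memB A i (\<alpha>g i \<omega>)} \<subseteq> {\<omega> \<in> space M. ennreal (t * Dr) < \<alpha>g i \<omega>}"
      proof -
        have "ennreal (t * Dr) < ennreal Dr" using tD by (simp add: ennreal_less_iff)
        then show ?thesis using True by (auto simp: memB_def intro: less_le_trans)
      qed
    qed (rule set_less_sets[OF i])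
    then have "exp_neg (Jint (lam i) (t * Dr) s) * emeasure M {\<omega> \<in> space M. memB A i (\<alpha>g i \<omega>)}
      \<le> exp_neg (Jint (lam i) (t * Dr) s) * emeasure M {\<omega> \<in> space M. ennreal (t * Dr) < \<alpha>g i \<omega>}"
      by (rule mult_left_mono) simp
    also have "\<dots> = emeasure M {\<omega> \<in> space M. ennreal s < \<alpha>g i \<omega>}"
      using surv_step[OF i tD(1), of s] tD s by simp
    also have "\<dots> = emeasure M {\<omega> \<in> space M. memB' A s i (\<alpha>g i \<omega>)}"
      using True by (simp add: memB'_def)
    finally show ?thesis .
  next
    case False
    show ?thesis
    proof (cases "i \<in> A")
      case True
      have "exp_neg (Jint (lam i) (t * Dr) s) * emeasure M {\<omega> \<in> space M. memB A i (\<alpha>g i \<omega>)}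
         \<le> 1 * emeasure M {\<omega> \<in> space M. memB A i (\<alpha>g i \<omega>)}"
        by (rule mult_right_mono) (simp_all add: exp_neg_le1)
      also have "\<dots> = emeasure M {\<omega> \<in> space M. memB' A s i (\<alpha>g i \<omega>)}"
        using True False by (simp add: memB_def memB'_def)
      finally show ?thesis .
    next
      case notA: False
      have bp: "0 < \<beta> i" "\<beta> i \<le> max (\<beta> i) s" using \<beta>pos[OF i] by auto
      have "Jint (lam i) (\<beta> i) (max (\<beta> i) s) \<le> Jint (lam i) (t * Dr) s"
      proof (cases "s \<le> \<beta> i")
        case True then show ?thesis by (simp add: Jint_empty)
      next
        case False then show ?thesis using \<open>\<not> \<beta> i < Dr\<close> tD by (intro Jint_mono) auto
      qed
      then have "exp_neg (Jint (lam i) (t * Dr) s) \<le> exp_neg (Jint (lam i) (\<beta> i) (max (\<beta> i) s))"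
        by (rule exp_neg_mono)
      moreover have "{\<omega> \<in> space M. memB A i (\<alpha>g i \<omega>)} = {\<omega> \<in> space M. ennreal (\<beta> i) < \<alpha>g i \<omega>}"
        using False notA by (simp add: memB_def)
      ultimately have "exp_neg (Jint (lam i) (t * Dr) s) * emeasure M {\<omega> \<in> space M. memB A i (\<alpha>g i \<omega>)}
        \<le> exp_neg (Jint (lam i) (\<beta> i) (max (\<beta> i) s)) * emeasure M {\<omega> \<in> space M. ennreal (\<beta> i) < \<alpha>g i \<omega>}"
        by (simp add: mult_right_mono)
      also have "\<dots> = emeasure M {\<omega> \<in> space M. ennreal (max (\<beta> i) s) < \<alpha>g i \<omega>}"
        using surv_step[OF i bp] by simp
      also have "\<dots> = emeasure M {\<omega> \<in> space M. memB' A s i (\<alpha>g i \<omega>)}"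
        using False notA by (simp add: memB'_def)
      finally show ?thesis .
    qed
  qed
qed

lemma probbound_t:
  assumes A: "\<And>j. j \<in> A \<Longrightarrow> Dr \<le> \<beta> j" and s: "Dr \<le> s" and t: "0 < t" "t < 1"
  shows "ennreal ((t * Dr / s)\<^sup>2) * emeasure M (F A) \<le> emeasure M (G A s)"
proof -
  have tD: "0 < t * Dr" "t * Dr \<le> s" using t Dr_pos s by (auto intro: order.trans[of _ Dr])
  have "(\<Sum>i<n. Jint (lam i) (t * Dr) s) \<le> ennreal (2 * ln s - 2 * ln (t * Dr))"
    using lam_meas lam_nonneg sumrate tD by (intro Jint_sum_bound) auto
  then have "ennreal ((t * Dr / s)\<^sup>2) \<le> exp_neg (\<Sum>i<n. Jint (lam i) (t * Dr) s)"
    using tD by (intro exp_neg_Jint_bound)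
  also have "\<dots> = (\<Prod>i<n. exp_neg (Jint (lam i) (t * Dr) s))"
    by (simp add: exp_neg_sum)
  finally have 1: "ennreal ((t * Dr / s)\<^sup>2) * emeasure M (F A) \<le> (\<Prod>i<n. exp_neg (Jint (lam i) (t * Dr) s)) * emeasure M (F A)"
    by (rule mult_right_mono) simp
  have "emeasure M (F A) = (\<Prod>i<n. emeasure M {\<omega> \<in> space M. \<alpha>g i \<omega> \<in> {x. memB A i x}})"
    unfolding F_def using rect[of "\<lambda>i. {x. memB A i x}"] memB_sets by simp
  then have 2: "(\<Prod>i<n. exp_neg (Jint (lam i) (t * Dr) s)) * emeasure M (F A)
      = (\<Prod>i<n. exp_neg (Jint (lam i) (t * Dr) s) * emeasure M {\<omega> \<in> space M. memB A i (\<alpha>g i \<omega>)})"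
    by (simp add: prod.distrib)
  have 3: "\<dots> \<le> (\<Prod>i<n. emeasure M {\<omega> \<in> space M. memB' A s i (\<alpha>g i \<omega>)})"
    by (intro prod_mono_ennreal) (rule factor, use A s t in auto)
  have 4: "emeasure M (G A s) = (\<Prod>i<n. emeasure M {\<omega> \<in> space M. \<alpha>g i \<omega> \<in> {x. memB' A s i x}})"
    unfolding G_def using rect[of "\<lambda>i. {x. memB' A s i x}"] memB'_sets by simp
  show ?thesis using 1 2 3 4 by simp
qed

lemma F_sets: "F A \<in> sets M"
proof -
  have ne: "{..<n} \<noteq> {}" using n1 by (simp add: lessThan_empty_iff)
  have "F A = (\<Inter>i\<in>{..<n}. \<alpha>g i -` {x. memB A i x} \<inter> space M)"
    unfolding F_def using ne by auto
  also have "\<dots> \<in> sets M"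
  proof (rule sets.finite_INT)
    fix i assume "i \<in> {..<n}"
    then show "\<alpha>g i -` {x. memB A i x} \<inter> space M \<in> sets M"
      by (intro measurable_sets[OF meas_\<alpha> memB_sets]) simp
  qed (use ne in auto)
  finally show ?thesis .
qed

lemma G_sets: "G A s \<in> sets M"
proof -
  have ne: "{..<n} \<noteq> {}" using n1 by (simp add: lessThan_empty_iff)
  have "G A s = (\<Inter>i\<in>{..<n}. \<alpha>g i -` {x. memB' A s i x} \<inter> space M)"
    unfolding G_def using ne by auto
  also have "\<dots> \<in> sets M"
  proof (rule sets.finite_INT)
    fix i assume "i \<in> {..<n}"
    then show "\<alpha>g i -` {x. memB' A s i x} \<inter> space M \<in> sets M"
      by (intro measurable_sets[OF meas_\<alpha> memB'_sets]) simp
  qed (use ne in auto)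
  finally show ?thesis .
qed

lemma probbound:
  assumes A: "\<And>j. j \<in> A \<Longrightarrow> Dr \<le> \<beta> j" and s: "Dr \<le> s"
  shows "ennreal ((Dr / s)\<^sup>2) * emeasure M (F A) \<le> emeasure M (G A s)"
proof -
  have sp: "s > 0" using s Dr_pos by simp
  obtain x where x: "emeasure M (F A) = ennreal x" "x \<ge> 0"
    using emeasure_eq_measure[of "F A"] by auto
  obtain y where y: "emeasure M (G A s) = ennreal y" "y \<ge> 0"
    using emeasure_eq_measure[of "G A s"] by auto
  have "(Dr / s)\<^sup>2 * x \<le> y"
  proof (rule field_le_mult_one_interval)
    fix z :: real assume z: "0 < z" "z < 1"
    define t where "t = sqrt z"
    have t: "0 < t" "t < 1" using z by (auto simp: t_def)
    have "ennreal ((t * Dr / s)\<^sup>2) * ennreal x \<le> ennreal y"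
      using probbound_t[of A s t] A s t x y by simp
    then have "(t * Dr / s)\<^sup>2 * x \<le> y"
      using x y by (simp add: ennreal_mult[symmetric] del: ennreal_mult)
    moreover have "(t * Dr / s)\<^sup>2 = z * (Dr / s)\<^sup>2"
      using z by (simp add: t_def power_mult_distrib power_divide)
    ultimately show "z * ((Dr / s)\<^sup>2 * x) \<le> y" by (simp add: mult.assoc)
  qed
  then show ?thesis using x y by (simp add: ennreal_mult[symmetric] del: ennreal_mult)
qed

end



context coreD begin

definition L :: "nat set" where "L = {i. i < n \<and> Dr \<le> \<beta> i}"
definition bA :: "nat set \<Rightarrow> real" where "bA A = Min (\<beta> ` A)"
definition Iset :: "nat set \<Rightarrow> real set" where "Iset A = {s. Dr \<le> s \<and> (A = {} \<or> s < bA A)}"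

definition Phi :: "nat set \<Rightarrow> 'a \<Rightarrow> ennreal" where
  "Phi A \<omega> = ennreal Dr * indicator (F A) \<omega>
     + (\<integral>\<^sup>+ s. indicator (Iset A) s * indicator (G A s) \<omega> \<partial>lborel)
     + (if A = {} then 0 else ennreal (bA A) * indicator (G A (bA A)) \<omega>)"

lemma L_finite: "finite L" unfolding L_def by auto

lemma bA_props:
  assumes "A \<subseteq> L" "A \<noteq> {}"
  shows "Dr \<le> bA A" "bA A \<in> \<beta> ` A" "\<And>j. j \<in> A \<Longrightarrow> bA A \<le> \<beta> j"
proof -
  have fin: "finite A" using assms(1) L_finite finite_subset by blast
  show "bA A \<in> \<beta> ` A" unfolding bA_def using fin assms(2) by (intro Min_in) auto
  then show "Dr \<le> bA A" using assms(1) by (auto simp: L_def)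
  show "\<And>j. j \<in> A \<Longrightarrow> bA A \<le> \<beta> j" unfolding bA_def using fin by auto
qed

lemma V_int:
  assumes A: "A \<subseteq> L"
  shows "(\<integral>\<^sup>+ s. ennreal ((Dr / s)\<^sup>2) * indicator (Iset A) s \<partial>lborel)
       = (if A = {} then ennreal Dr else ennreal (Dr - Dr\<^sup>2 / bA A))"
proof -
  have fm: "(\<lambda>s::real. (Dr / s)\<^sup>2) \<in> borel_measurable borel" by measurable
  have der: "DERIV (\<lambda>s. - (Dr\<^sup>2 / s)) x :> (Dr / x)\<^sup>2" if "Dr \<le> x" for x
  proof -
    have "x \<noteq> 0" using that Dr_pos by auto
    then show ?thesis
      by (auto intro!: derivative_eq_intros simp: power2_eq_square field_simps)
  qed
  show ?thesis
  proof (cases "A = {}")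
    case True
    then have "Iset A = {Dr..}" by (auto simp: Iset_def)
    moreover have "(\<integral>\<^sup>+ s. ennreal ((Dr / s)\<^sup>2) * indicator {Dr..} s \<partial>lborel) = ennreal (0 - (- (Dr\<^sup>2 / Dr)))"
    proof (rule nn_integral_FTC_atLeast[OF fm, where F="\<lambda>s. - (Dr\<^sup>2 / s)" and T=0])
      show "((\<lambda>s. - (Dr\<^sup>2 / s)) \<longlongrightarrow> 0) at_top"
        using tendsto_minus[OF tendsto_divide_0[OF tendsto_const filterlim_at_top_imp_at_infinity[OF filterlim_ident]], of "Dr\<^sup>2"]
        by simp
    qed (use der in auto)
    moreover have "0 - (- (Dr\<^sup>2 / Dr)) = Dr" using Dr_pos by (simp add: power2_eq_square)
    ultimately show ?thesis using True by simp
  next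
    case False
    have b: "Dr \<le> bA A" using bA_props[OF A False] by simp
    have "(\<integral>\<^sup>+ s. ennreal ((Dr / s)\<^sup>2) * indicator (Iset A) s \<partial>lborel)
        = (\<integral>\<^sup>+ s. ennreal ((Dr / s)\<^sup>2) * indicator {Dr .. bA A} s \<partial>lborel)"
    proof (rule nn_integral_cong_AE)
      show "AE s in lborel. ennreal ((Dr / s)\<^sup>2) * indicator (Iset A) s = ennreal ((Dr / s)\<^sup>2) * indicator {Dr .. bA A} s"
        using AE_lborel_singleton[of "bA A"] by eventually_elim (auto simp: Iset_def False indicator_def)
    qed
    also have "\<dots> = ennreal (- (Dr\<^sup>2 / bA A) - (- (Dr\<^sup>2 / Dr)))"
      by (rule nn_integral_FTC_Icc[OF fm, where F="\<lambda>s. - (Dr\<^sup>2 / s)"]) (use der b in auto)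
    also have "- (Dr\<^sup>2 / bA A) - (- (Dr\<^sup>2 / Dr)) = Dr - Dr\<^sup>2 / bA A"
      using Dr_pos by (simp add: power2_eq_square)
    finally show ?thesis using False by simp
  qed
qed

lemma G_pair_sets:
  "{p \<in> space (M \<Otimes>\<^sub>M lborel). \<forall>i<n. memB' A (snd p) i (\<alpha>g i (fst p))} \<in> sets (M \<Otimes>\<^sub>M lborel)"
proof -
  have [measurable]: "\<alpha>g i \<in> borel_measurable M" if "i < n" for i using meas_\<alpha> that by simp
  show ?thesis unfolding memB'_def by measurable
qed

lemma integrand_meas:
  "(\<lambda>(\<omega>, s). indicator (Iset A) s * indicator (G A s) \<omega> :: ennreal) \<in> borel_measurable (M \<Otimes>\<^sub>M lborel)"
proof -
  have Is: "Iset A \<in> sets borel"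
  proof -
    have "Iset A = {x \<in> space borel. Dr \<le> x \<and> (A = {} \<or> x < bA A)}" by (auto simp: Iset_def)
    also have "\<dots> \<in> sets borel" by measurable
    finally show ?thesis .
  qed
  have meas: "(\<lambda>p. indicator (Iset A) (snd p) * indicator {p \<in> space (M \<Otimes>\<^sub>M lborel). \<forall>i<n. memB' A (snd p) i (\<alpha>g i (fst p))} p :: ennreal) \<in> borel_measurable (M \<Otimes>\<^sub>M lborel)"
    using G_pair_sets Is by measurable
  show ?thesis
    apply (rule measurable_cong[THEN iffD2, OF _ meas])
    apply (auto simp: space_pair_measure G_def indicator_def)
    done
qed

lemma Phi_meas: "Phi A \<in> borel_measurable M"
proof -
  have [measurable]: "F A \<in> sets M" "G A s \<in> sets M" for s using F_sets G_sets by auto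
  have "(\<lambda>\<omega>. \<integral>\<^sup>+ s. indicator (Iset A) s * indicator (G A s) \<omega> \<partial>lborel) \<in> borel_measurable M"
    using lborel.borel_measurable_nn_integral[OF integrand_meas] .
  then show ?thesis unfolding Phi_def by measurable
qed

lemma mid_eq:
  "(\<integral>\<^sup>+\<omega>. (\<integral>\<^sup>+ s. indicator (Iset A) s * indicator (G A s) \<omega> \<partial>lborel) \<partial>M)
   = (\<integral>\<^sup>+ s. indicator (Iset A) s * emeasure M (G A s) \<partial>lborel)"
proof -
  interpret pair_sigma_finite M lborel ..
  have "(\<integral>\<^sup>+ s. (\<integral>\<^sup>+\<omega>. indicator (Iset A) s * indicator (G A s) \<omega> \<partial>M) \<partial>lborel)
      = (\<integral>\<^sup>+\<omega>. (\<integral>\<^sup>+ s. indicator (Iset A) s * indicator (G A s) \<omega> \<partial>lborel) \<partial>M)"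
    using Fubini'[of "\<lambda>\<omega> s. indicator (Iset A) s * indicator (G A s) \<omega> :: ennreal"] integrand_meas[of A]
    by simp
  moreover have "(\<integral>\<^sup>+\<omega>. indicator (Iset A) s * indicator (G A s) \<omega> \<partial>M) = indicator (Iset A) s * emeasure M (G A s)" for s
    using G_sets by (simp add: nn_integral_cmult_indicator)
  ultimately show ?thesis by simp
qed

lemma mid_bound:
  assumes A: "A \<subseteq> L"
  shows "(\<integral>\<^sup>+ s. ennreal ((Dr / s)\<^sup>2) * indicator (Iset A) s \<partial>lborel) * emeasure M (F A)
     \<le> (\<integral>\<^sup>+ s. indicator (Iset A) s * emeasure M (G A s) \<partial>lborel)"
proof -
  have AL: "\<And>j. j \<in> A \<Longrightarrow> Dr \<le> \<beta> j" using A by (auto simp: L_def)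
  have Is: "Iset A \<in> sets borel"
  proof -
    have "Iset A = {x \<in> space borel. Dr \<le> x \<and> (A = {} \<or> x < bA A)}" by (auto simp: Iset_def)
    also have "\<dots> \<in> sets borel" by measurable
    finally show ?thesis .
  qed
  have fm: "(\<lambda>s. ennreal ((Dr / s)\<^sup>2) * indicator (Iset A) s) \<in> borel_measurable lborel"
    using Is by measurable
  have "(\<integral>\<^sup>+ s. ennreal ((Dr / s)\<^sup>2) * indicator (Iset A) s \<partial>lborel) * emeasure M (F A)
     = (\<integral>\<^sup>+ s. ennreal ((Dr / s)\<^sup>2) * indicator (Iset A) s * emeasure M (F A) \<partial>lborel)"
    using fm by (simp add: nn_integral_multc)
  also have "\<dots> \<le> (\<integral>\<^sup>+ s. indicator (Iset A) s * emeasure M (G A s) \<partial>lborel)"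
  proof (rule nn_integral_mono)
    fix s :: real
    show "ennreal ((Dr / s)\<^sup>2) * indicator (Iset A) s * emeasure M (F A) \<le> indicator (Iset A) s * emeasure M (G A s)"
    proof (cases "s \<in> Iset A")
      case True
      then have "Dr \<le> s" by (simp add: Iset_def)
      from probbound[OF AL this] True show ?thesis by simp
    qed simp
  qed
  finally show ?thesis .
qed

lemma Phi_int:
  assumes A: "A \<subseteq> L"
  shows "ennreal (2 * Dr) * emeasure M (F A) \<le> (\<integral>\<^sup>+\<omega>. Phi A \<omega> \<partial>M)"
proof -
  have AL: "\<And>j. j \<in> A \<Longrightarrow> Dr \<le> \<beta> j" using A by (auto simp: L_def)
  have [measurable]: "F A \<in> sets M" "G A s \<in> sets M" for s using F_sets G_sets by auto
  have mm: "(\<lambda>\<omega>. \<integral>\<^sup>+ s. indicator (Iset A) s * indicator (G A s) \<omega> \<partial>lborel) \<in> borel_measurable M"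
    using lborel.borel_measurable_nn_integral[OF integrand_meas] .
  define P where "P = emeasure M (F A)"
  define mid where "mid = (\<integral>\<^sup>+ s. indicator (Iset A) s * emeasure M (G A s) \<partial>lborel)"
  have m1: "(\<lambda>\<omega>. ennreal Dr * indicator (F A) \<omega>) \<in> borel_measurable M" by measurable
  have m3: "(\<lambda>\<omega>. if A = {} then 0 else ennreal (bA A) * indicator (G A (bA A)) \<omega>) \<in> borel_measurable M"
    by measurable
  have split: "(\<integral>\<^sup>+\<omega>. Phi A \<omega> \<partial>M) = ennreal Dr * P + mid + (if A = {} then 0 else ennreal (bA A) * emeasure M (G A (bA A)))"
    unfolding Phi_def
    apply (subst nn_integral_add)
      apply (rule borel_measurable_add[OF m1 mm])
     apply (rule m3)
    apply (subst nn_integral_add[OF m1 mm])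
    apply (simp add: nn_integral_cmult_indicator P_def mid_def mid_eq)
    done
  have V: "(\<integral>\<^sup>+ s. ennreal ((Dr / s)\<^sup>2) * indicator (Iset A) s \<partial>lborel) * P \<le> mid"
    using mid_bound[OF A] by (simp add: P_def mid_def)
  show ?thesis
  proof (cases "A = {}")
    case True
    have "(\<integral>\<^sup>+\<omega>. Phi A \<omega> \<partial>M) = ennreal Dr * P + mid"
      using split True by simp
    moreover have "ennreal Dr * P \<le> mid" using V V_int[OF A] True by simp
    moreover have "ennreal (2 * Dr) = ennreal Dr + ennreal Dr"
      using Dr_pos by (simp add: ennreal_plus[symmetric] del: ennreal_plus)
    ultimately show ?thesis
      by (simp add: P_def[symmetric] distrib_right add_left_mono)
  next
    case False
    define b where "b = bA A"
    have b: "Dr \<le> b" using bA_props[OF A False] by (simp add: b_def)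
    have bp: "b > 0" using b Dr_pos by simp
    have "(\<integral>\<^sup>+\<omega>. Phi A \<omega> \<partial>M) = ennreal Dr * P + mid + ennreal b * emeasure M (G A b)"
      using split False by (simp add: b_def)
    moreover have "ennreal (Dr - Dr\<^sup>2 / b) * P \<le> mid" using V V_int[OF A] False by (simp add: b_def)
    moreover have "ennreal b * (ennreal ((Dr / b)\<^sup>2) * P) \<le> ennreal b * emeasure M (G A b)"
      using probbound[OF AL b] by (simp add: P_def mult_left_mono)
    moreover have "ennreal b * (ennreal ((Dr / b)\<^sup>2) * P) = ennreal (Dr\<^sup>2 / b) * P"
    proof -
      have "b * (Dr / b)\<^sup>2 = Dr\<^sup>2 / b" using bp by (simp add: power2_eq_square field_simps)
      then show ?thesis using bp by (simp add: ennreal_mult[symmetric] mult.assoc[symmetric] del: ennreal_mult)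
    qed
    moreover have "ennreal (2 * Dr) * P = ennreal Dr * P + ennreal (Dr - Dr\<^sup>2 / b) * P + ennreal (Dr\<^sup>2 / b) * P"
    proof -
      have nn: "0 \<le> Dr - Dr\<^sup>2 / b" using b bp Dr_pos by (simp add: power2_eq_square field_simps)
      have "2 * Dr = Dr + (Dr - Dr\<^sup>2 / b) + Dr\<^sup>2 / b" by simp
      then have "ennreal (2 * Dr) = ennreal Dr + ennreal (Dr - Dr\<^sup>2 / b) + ennreal (Dr\<^sup>2 / b)"
        using nn Dr_pos bp by (simp add: ennreal_plus[symmetric] del: ennreal_plus)
      then show ?thesis by (simp add: distrib_right)
    qed
    ultimately show ?thesis
      by (simp add: P_def[symmetric]) (metis add_mono order_refl)
  qed
qed

end



context coreD begin

definition E :: "'a set" where "E = {\<omega> \<in> space M. \<forall>i<n. ennreal Dr \<le> tauv \<beta> (\<lambda>j. \<alpha>g j \<omega>) i}"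
definition A0 :: "'a \<Rightarrow> nat set" where "A0 \<omega> = {i \<in> L. \<alpha>g i \<omega> \<le> ennreal (\<beta> i)}"

lemma F_unique:
  assumes "A \<subseteq> L" "\<omega> \<in> F A" shows "A = A0 \<omega>"
proof -
  have mem: "\<And>i. i < n \<Longrightarrow> memB A i (\<alpha>g i \<omega>)" using assms(2) by (auto simp: F_def)
  show ?thesis
  proof (intro set_eqI iffI)
    fix i assume "i \<in> A"
    then have "i \<in> L" using assms(1) by auto
    then have "i < n" "\<not> \<beta> i < Dr" by (auto simp: L_def)
    then show "i \<in> A0 \<omega>" using mem[of i] \<open>i \<in> A\<close> \<open>i \<in> L\<close> by (auto simp: memB_def A0_def)
  next
    fix i assume "i \<in> A0 \<omega>"
    then have "i \<in> L" "\<alpha>g i \<omega> \<le> ennreal (\<beta> i)" by (auto simp: A0_def)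
    then have "i < n" "\<not> \<beta> i < Dr" by (auto simp: L_def)
    then show "i \<in> A" using mem[of i] \<open>\<alpha>g i \<omega> \<le> ennreal (\<beta> i)\<close> by (auto simp: memB_def split: if_splits)
  qed
qed

lemma F_A0:
  assumes "\<omega> \<in> space M" shows "\<omega> \<in> F (A0 \<omega>) \<longleftrightarrow> \<omega> \<in> E"
proof -
  have "memB (A0 \<omega>) i (\<alpha>g i \<omega>) \<longleftrightarrow> ennreal Dr \<le> tauv \<beta> (\<lambda>j. \<alpha>g j \<omega>) i" if "i < n" for i
  proof (cases "\<beta> i < Dr")
    case True
    then have "ennreal (\<beta> i) < ennreal Dr" using Dr_pos \<beta>pos[OF that] by (simp add: ennreal_less_iff)
    then show ?thesis using True by (auto simp: memB_def tauv_def max_def)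
  next
    case False
    then have "i \<in> L" using that by (auto simp: L_def)
    moreover have "ennreal Dr \<le> ennreal (\<beta> i)" using False by (intro ennreal_leI) simp
    ultimately show ?thesis using False
      by (auto simp: memB_def tauv_def A0_def intro: order.trans[OF _ max.cobounded2])
  qed
  then show ?thesis using assms by (auto simp: F_def E_def)
qed

lemma G_sub_F: assumes "Dr \<le> s" shows "G A s \<subseteq> F A"
proof
  fix \<omega> assume "\<omega> \<in> G A s"
  then have mem: "\<And>i. i < n \<Longrightarrow> memB' A s i (\<alpha>g i \<omega>)" and sp: "\<omega> \<in> space M" by (auto simp: G_def)
  have "memB A i (\<alpha>g i \<omega>)" if "i < n" for i
  proof -
    have "ennreal Dr \<le> ennreal s" using assms by (rule ennreal_leI)
    moreover have "ennreal (\<beta> i) \<le> ennreal (max (\<beta> i) s)" by (intro ennreal_leI) simp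
    ultimately show ?thesis using mem[OF that]
      by (auto simp: memB_def memB'_def split: if_splits intro: order.strict_implies_order le_less_trans)
  qed
  then show "\<omega> \<in> F A" using sp by (auto simp: F_def)
qed

lemma Phi_zero:
  assumes A: "A \<subseteq> L" and nF: "\<omega> \<notin> F A" shows "Phi A \<omega> = 0"
proof -
  have z: "indicator (Iset A) s * indicator (G A s) \<omega> = (0::ennreal)" for s :: real
    proof (cases "s \<in> Iset A")
      case True
      then have "Dr \<le> s" by (simp add: Iset_def)
      then have "\<omega> \<notin> G A s" using G_sub_F nF by blast
      then show ?thesis by simp
    qed simp
  have "(\<integral>\<^sup>+ s. indicator (Iset A) s * indicator (G A s) \<omega> \<partial>lborel) = 0"
    by (simp add: z)
  moreover have "\<omega> \<notin> G A (bA A)" if "A \<noteq> {}"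
    using G_sub_F[OF bA_props(1)[OF A that]] nF by blast
  ultimately show ?thesis using nF by (auto simp: Phi_def)
qed

lemma Phi_le_Q:
  assumes A: "A \<subseteq> L" and inF: "\<omega> \<in> F A"
  shows "Phi A \<omega> \<le> stop_Q n \<beta> (\<lambda>i. \<alpha>g i \<omega>)"
proof -
  define x where "x i = \<alpha>g i \<omega>" for i
  define \<tau> where "\<tau> = tauv \<beta> x"
  define k where "k = istar n \<beta> x"
  define m where "m = \<tau> k"
  have Q: "stop_Q n \<beta> (\<lambda>i. \<alpha>g i \<omega>) = m + ennreal (\<beta> k)"
    unfolding stop_Q_alt m_def \<tau>_def k_def x_def by simp
  have k: "k < n" "\<And>j. j < n \<Longrightarrow> m \<le> \<tau> j"
    using istar_props[OF n1] unfolding m_def \<tau>_def k_def by auto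
  have mem: "\<And>i. i < n \<Longrightarrow> memB A i (x i)" using inF by (auto simp: F_def x_def)
  have AL: "\<And>j. j \<in> A \<Longrightarrow> j < n \<and> Dr \<le> \<beta> j" using A by (auto simp: L_def)
  have xt: "x i \<le> \<tau> i" "ennreal (\<beta> i) \<le> \<tau> i" for i by (auto simp: \<tau>_def tauv_def)
  have mD: "ennreal Dr \<le> m"
  proof (cases "\<beta> k < Dr")
    case True then show ?thesis using mem[OF k(1)] xt[of k] by (auto simp: memB_def m_def)
  next
    case False
    then have "ennreal Dr \<le> ennreal (\<beta> k)" by (intro ennreal_leI) simp
    then show ?thesis using xt[of k] by (auto simp: m_def intro: order.trans)
  qed
  have int: "(\<integral>\<^sup>+ s. indicator (Iset A) s * indicator (G A s) \<omega> \<partial>lborel)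
      \<le> (\<integral>\<^sup>+ s. indicator {s. Dr \<le> s \<and> ennreal s < m} s \<partial>lborel)"
  proof (rule nn_integral_mono)
    fix s :: real
    show "indicator (Iset A) s * indicator (G A s) \<omega> \<le> (indicator {s. Dr \<le> s \<and> ennreal s < m} s :: ennreal)"
    proof (cases "s \<in> Iset A \<and> \<omega> \<in> G A s")
      case True
      then have sI: "Dr \<le> s" "A = {} \<or> s < bA A" and mk: "memB' A s k (x k)"
        using k(1) by (auto simp: Iset_def G_def x_def)
      have "ennreal s < m"
      proof (cases "\<beta> k < Dr")
        case True then show ?thesis using mk xt[of k] by (auto simp: memB'_def m_def)
      next
        case nlt: False
        show ?thesis
        proof (cases "k \<in> A")
          case True
          then have ne: "A \<noteq> {}" by auto
          then have "s < \<beta> k" using sI bA_props(3)[OF A ne True] by auto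
          then have "ennreal s < ennreal (\<beta> k)" using sI Dr_pos by (simp add: ennreal_less_iff)
          then show ?thesis using xt[of k] by (auto simp: m_def)
        next
          case False
          then have "ennreal (max (\<beta> k) s) < x k" using mk nlt by (simp add: memB'_def)
          moreover have "ennreal s \<le> ennreal (max (\<beta> k) s)" by (intro ennreal_leI) simp
          ultimately show ?thesis using xt[of k] by (auto simp: m_def)
        qed
      qed
      then show ?thesis using True sI by (simp add: indicator_def)
    next
      case False then show ?thesis by (auto simp: indicator_def)
    qed
  qed
  also have "\<dots> = emeasure lborel {s. Dr \<le> s \<and> ennreal s < m}"
  proof (rule nn_integral_indicator)
    have "{s. Dr \<le> s \<and> ennreal s < m} = {s \<in> space borel. Dr \<le> s \<and> ennreal s < m}" by simp
    also have "\<dots> \<in> sets borel" by measurable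
    finally show "{s. Dr \<le> s \<and> ennreal s < m} \<in> sets lborel" by simp
  qed
  finally have int2: "ennreal Dr + (\<integral>\<^sup>+ s. indicator (Iset A) s * indicator (G A s) \<omega> \<partial>lborel) \<le> m"
    using Ico_bound[OF mD] Dr_pos by (meson add_left_mono less_imp_le order.trans)
  show ?thesis
  proof (cases "A \<noteq> {} \<and> \<omega> \<in> G A (bA A)")
    case False
    then have "Phi A \<omega> = ennreal Dr + (\<integral>\<^sup>+ s. indicator (Iset A) s * indicator (G A s) \<omega> \<partial>lborel)"
      using inF by (auto simp: Phi_def)
    then show ?thesis using int2 Q by (simp add: add_increasing2)
  next
    case True
    define b where "b = bA A"
    have ne: "A \<noteq> {}" and inG: "\<omega> \<in> G A b" using True by (auto simp: b_def)
    obtain j0 where j0: "j0 \<in> A" "\<beta> j0 = b" using bA_props(2)[OF A ne] by (auto simp: b_def)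
    have j0n: "j0 < n" "\<not> \<beta> j0 < Dr" using AL[OF j0(1)] by auto
    have tj0: "\<tau> j0 = ennreal b"
      using mem[OF j0n(1)] j0 j0n(2) by (auto simp: memB_def \<tau>_def tauv_def max_def)
    have kA: "k \<in> A"
    proof (rule ccontr)
      assume "k \<notin> A"
      have "ennreal b < \<tau> k"
      proof (cases "\<beta> k < Dr")
        case True then show ?thesis using inG k(1) xt[of k] by (auto simp: G_def memB'_def x_def)
      next
        case False
        then have "ennreal (max (\<beta> k) b) < x k" using inG k(1) \<open>k \<notin> A\<close> by (auto simp: G_def memB'_def x_def)
        moreover have "ennreal b \<le> ennreal (max (\<beta> k) b)" by (intro ennreal_leI) simp
        ultimately show ?thesis using xt[of k] by auto
      qed
      moreover have "\<tau> k \<le> \<tau> j0" using k(2)[OF j0n(1)] by (simp add: m_def)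
      ultimately show False using tj0 by simp
    qed
    have kb: "b \<le> \<beta> k" using bA_props(3)[OF A ne kA] by (simp add: b_def)
    have tk: "\<tau> k = ennreal (\<beta> k)"
      using mem[OF k(1)] kA AL[OF kA] by (auto simp: memB_def \<tau>_def tauv_def max_def)
    have "\<tau> k \<le> ennreal b" using k(2)[OF j0n(1)] tj0 by (simp add: m_def)
    moreover have "0 \<le> b" using bA_props(1)[OF A ne] Dr_pos by (simp add: b_def)
    ultimately have "\<beta> k \<le> b" using tk by (simp add: ennreal_le_iff)
    then have "\<beta> k = b" using kb by simp
    then have mb: "m = ennreal b" "ennreal (\<beta> k) = ennreal b" using tk by (auto simp: m_def)
    have "Phi A \<omega> = ennreal Dr + (\<integral>\<^sup>+ s. indicator (Iset A) s * indicator (G A s) \<omega> \<partial>lborel) + ennreal b"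
      using inF ne inG by (simp add: Phi_def b_def)
    also have "\<dots> \<le> m + ennreal b" using int2 by (simp add: add_right_mono)
    also have "\<dots> = stop_Q n \<beta> (\<lambda>i. \<alpha>g i \<omega>)" using Q mb by simp
    finally show ?thesis .
  qed
qed

lemma A0_L: "A0 \<omega> \<subseteq> L" by (auto simp: A0_def)

lemma sum_split:
  fixes g :: "nat set \<Rightarrow> ennreal"
  assumes "\<And>A. A \<subseteq> L \<Longrightarrow> A \<noteq> A0 \<omega> \<Longrightarrow> g A = 0"
  shows "(\<Sum>A\<in>Pow L. g A) = g (A0 \<omega>)"
proof -
  have "(\<Sum>A\<in>Pow L. g A) = g (A0 \<omega>) + (\<Sum>A\<in>Pow L - {A0 \<omega>}. g A)"
    using A0_L L_finite by (intro sum.remove) auto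
  also have "(\<Sum>A\<in>Pow L - {A0 \<omega>}. g A) = 0" using assms by (intro sum.neutral) auto
  finally show ?thesis by simp
qed

lemma sum_Phi:
  assumes "\<omega> \<in> space M"
  shows "(\<Sum>A\<in>Pow L. Phi A \<omega>) \<le> stop_Q n \<beta> (\<lambda>i. \<alpha>g i \<omega>) * indicator E \<omega>"
proof -
  have "(\<Sum>A\<in>Pow L. Phi A \<omega>) = Phi (A0 \<omega>) \<omega>"
    by (rule sum_split) (use Phi_zero F_unique in blast)
  also have "\<dots> \<le> stop_Q n \<beta> (\<lambda>i. \<alpha>g i \<omega>) * indicator E \<omega>"
  proof (cases "\<omega> \<in> E")
    case True
    then have "\<omega> \<in> F (A0 \<omega>)" using F_A0 assms by blast
    then show ?thesis using Phi_le_Q[OF A0_L] True by simp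
  next
    case False
    then have "\<omega> \<notin> F (A0 \<omega>)" using F_A0 assms by blast
    then show ?thesis using Phi_zero[OF A0_L] by simp
  qed
  finally show ?thesis .
qed

lemma sum_ind:
  assumes "\<omega> \<in> space M"
  shows "(\<Sum>A\<in>Pow L. indicator (F A) \<omega> :: ennreal) = indicator E \<omega>"
proof -
  have "(\<Sum>A\<in>Pow L. indicator (F A) \<omega> :: ennreal) = indicator (F (A0 \<omega>)) \<omega>"
    by (rule sum_split) (auto simp: indicator_def dest: F_unique)
  also have "\<dots> = indicator E \<omega>" using F_A0[OF assms] by (simp add: indicator_def)
  finally show ?thesis .
qed

lemma E_sets: "E \<in> sets M"
proof -
  have "E = (\<Union>A\<in>Pow L. F A)"
  proof (intro set_eqI iffI)
    fix \<omega> assume "\<omega> \<in> E"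
    then have "\<omega> \<in> space M" by (simp add: E_def)
    then show "\<omega> \<in> (\<Union>A\<in>Pow L. F A)" using F_A0 A0_L \<open>\<omega> \<in> E\<close> by blast
  next
    fix \<omega> assume "\<omega> \<in> (\<Union>A\<in>Pow L. F A)"
    then obtain A where A: "A \<subseteq> L" "\<omega> \<in> F A" by auto
    then have "\<omega> \<in> space M" by (simp add: F_def)
    then show "\<omega> \<in> E" using F_A0 F_unique[OF A] A by simp
  qed
  also have "\<dots> \<in> sets M" using L_finite F_sets by (intro sets.finite_UN) auto
  finally show ?thesis .
qed

lemma key:
  "ennreal (2 * Dr) * emeasure M E \<le> (\<integral>\<^sup>+\<omega>. stop_Q n \<beta> (\<lambda>i. \<alpha>g i \<omega>) * indicator E \<omega> \<partial>M)"
proof -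
  have "emeasure M E = (\<integral>\<^sup>+\<omega>. indicator E \<omega> \<partial>M)" using E_sets by simp
  also have "\<dots> = (\<integral>\<^sup>+\<omega>. (\<Sum>A\<in>Pow L. indicator (F A) \<omega>) \<partial>M)"
    by (rule nn_integral_cong) (simp add: sum_ind)
  also have "\<dots> = (\<Sum>A\<in>Pow L. emeasure M (F A))"
    using F_sets by (subst nn_integral_sum) auto
  finally have "ennreal (2 * Dr) * emeasure M E = (\<Sum>A\<in>Pow L. ennreal (2 * Dr) * emeasure M (F A))"
    by (simp add: sum_distrib_left)
  also have "\<dots> \<le> (\<Sum>A\<in>Pow L. (\<integral>\<^sup>+\<omega>. Phi A \<omega> \<partial>M))"
    by (intro sum_mono Phi_int) auto
  also have "\<dots> = (\<integral>\<^sup>+\<omega>. (\<Sum>A\<in>Pow L. Phi A \<omega>) \<partial>M)"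
    using Phi_meas by (subst nn_integral_sum) auto
  also have "\<dots> \<le> (\<integral>\<^sup>+\<omega>. stop_Q n \<beta> (\<lambda>i. \<alpha>g i \<omega>) * indicator E \<omega> \<partial>M)"
    by (rule nn_integral_mono) (rule sum_Phi)
  finally show ?thesis .
qed

end



lemma capped_le2D:
  fixes x y :: "nat \<Rightarrow> ennreal"
  assumes n1: "n \<ge> 1" and D: "D = Min ((\<lambda>i. max (y i) (ennreal (\<beta> i))) ` {..<n})"
  shows "stop_Q n \<beta> (\<lambda>i. min (x i) (y i)) \<le> 2 * D"
proof -
  define x' where "x' i = min (x i) (y i)" for i
  define k where "k = istar n \<beta> x'"
  have ne: "{..<n} \<noteq> {}" using n1 by (simp add: lessThan_empty_iff)
  have "D \<in> (\<lambda>i. max (y i) (ennreal (\<beta> i))) ` {..<n}" unfolding D using ne by (intro Min_in) auto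
  then obtain j0 where j0: "j0 < n" "max (y j0) (ennreal (\<beta> j0)) = D" by auto
  have k: "k < n" "tauv \<beta> x' k \<le> tauv \<beta> x' j0" using istar_props[OF n1] j0 by (auto simp: k_def)
  have "tauv \<beta> x' j0 \<le> D" using j0 by (auto simp: tauv_def x'_def intro: le_max_iff_disj[THEN iffD2] simp: le_max_iff_disj min_le_iff_disj)
  then have t: "tauv \<beta> x' k \<le> D" using k by simp
  have "ennreal (\<beta> k) \<le> tauv \<beta> x' k" by (simp add: tauv_def)
  then have "tauv \<beta> x' k + ennreal (\<beta> k) \<le> D + D" using t by (intro add_mono) auto
  then show ?thesis unfolding stop_Q_alt x'_def[symmetric] k_def[symmetric] by (simp add: mult_2)
qed

lemma capped_eq:
  fixes x y :: "nat \<Rightarrow> ennreal"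
  assumes n1: "n \<ge> 1" and D: "D = Min ((\<lambda>i. max (y i) (ennreal (\<beta> i))) ` {..<n})"
    and ex: "\<exists>i<n. tauv \<beta> x i < D"
  shows "stop_Q n \<beta> (\<lambda>i. min (x i) (y i)) = stop_Q n \<beta> x"
proof -
  define x' where "x' i = min (x i) (y i)" for i
  define d where "d i = max (y i) (ennreal (\<beta> i))" for i
  define k where "k = istar n \<beta> x"
  define m where "m = tauv \<beta> x k"
  have ne: "{..<n} \<noteq> {}" using n1 by (simp add: lessThan_empty_iff)
  have dD: "D \<le> d i" if "i < n" for i using that unfolding D d_def by (intro Min_le) auto
  have k: "k < n" "\<And>j. j < n \<Longrightarrow> m \<le> tauv \<beta> x j" using istar_props[OF n1] by (auto simp: k_def m_def)
  have mD: "m < D" using ex k(2) by (auto intro: le_less_trans)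
  have t': "tauv \<beta> x' i = min (tauv \<beta> x i) (d i)" for i
    by (simp add: tauv_def x'_def d_def max_min_distrib1)
  have Min1: "Min (tauv \<beta> x ` {..<n}) = m"
    using k by (intro Min_eqI) (auto simp: m_def)
  have dm: "m < d i" if "i < n" for i using mD dD[OF that] by simp
  have Min2: "Min (tauv \<beta> x' ` {..<n}) = m"
  proof (rule Min_eqI)
    show "finite (tauv \<beta> x' ` {..<n})" by simp
    show "\<And>z. z \<in> tauv \<beta> x' ` {..<n} \<Longrightarrow> m \<le> z" using k(2) dm by (auto simp: t' less_imp_le)
    show "m \<in> tauv \<beta> x' ` {..<n}" using k(1) dm[OF k(1)] by (auto simp: t' m_def min_def intro!: image_eqI[of _ _ k])
  qed
  have sets: "{j. j < n \<and> tauv \<beta> x' j = Min (tauv \<beta> x' ` {..<n})} = {j. j < n \<and> tauv \<beta> x j = Min (tauv \<beta> x ` {..<n})}"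
  proof -
    have "(min (tauv \<beta> x j) (d j) = m) \<longleftrightarrow> (tauv \<beta> x j = m)" if "j < n" for j
      using dm[OF that] by (auto simp: min_def)
    then show ?thesis unfolding Min1 Min2 by (auto simp: t')
  qed
  have kk: "istar n \<beta> x' = k" unfolding k_def istar_eq_SOME sets ..
  have tk: "tauv \<beta> x' k = tauv \<beta> x k" using t'[of k] dm[OF k(1)] by (simp add: m_def min_def less_imp_le)
  show ?thesis
    unfolding stop_Q_alt x'_def[symmetric] kk k_def[symmetric] using tk by simp
qed

context core begin

lemma caps:
  fixes y :: "nat \<Rightarrow> ennreal"
  shows "(\<integral>\<^sup>+\<omega>. stop_Q n \<beta> (\<lambda>i. min (\<alpha>g i \<omega>) (y i)) \<partial>M) \<le> (\<integral>\<^sup>+\<omega>. stop_Q n \<beta> (\<lambda>i. \<alpha>g i \<omega>) \<partial>M)"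
proof -
  define D where "D = Min ((\<lambda>i. max (y i) (ennreal (\<beta> i))) ` {..<n})"
  have ne: "{..<n} \<noteq> {}" using n1 by (simp add: lessThan_empty_iff)
  have Dle: "D \<le> max (y i) (ennreal (\<beta> i))" if "i < n" for i
    unfolding D_def using that by (intro Min_le) auto
  have Qm: "(\<lambda>\<omega>. stop_Q n \<beta> (\<lambda>i. \<alpha>g i \<omega>)) \<in> borel_measurable M"
    by (rule stop_Q_measurable[OF n1]) (rule meas_\<alpha>)
  show ?thesis
  proof (cases "D = \<top>")
    case True
    have "y i = \<top>" if "i < n" for i
      using Dle[OF that] True by (auto simp: max_def top_unique split: if_splits)
    then have "stop_Q n \<beta> (\<lambda>i. min (\<alpha>g i \<omega>) (y i)) = stop_Q n \<beta> (\<lambda>i. \<alpha>g i \<omega>)" for \<omega>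
      by (intro stop_Q_cong n1) simp
    then show ?thesis by simp
  next
    case False
    then obtain Dr where Dr: "D = ennreal Dr" "Dr \<ge> 0" by (cases D rule: ennreal_cases) auto
    have "D \<in> (\<lambda>i. max (y i) (ennreal (\<beta> i))) ` {..<n}" unfolding D_def using ne by (intro Min_in) auto
    then obtain j0 where j0: "j0 < n" "D = max (y j0) (ennreal (\<beta> j0))" by auto
    then have "ennreal (\<beta> j0) \<le> ennreal Dr" using Dr by simp
    then have "\<beta> j0 \<le> Dr" using Dr by (simp add: ennreal_le_iff)
    then have pos: "Dr > 0" using \<beta>pos[OF j0(1)] by simp
    interpret cd: coreD M n \<beta> lam \<alpha>g Dr
      by unfold_locales (rule pos)
    define Q where "Q \<omega> = stop_Q n \<beta> (\<lambda>i. \<alpha>g i \<omega>)" for \<omega>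
    define Q' where "Q' \<omega> = stop_Q n \<beta> (\<lambda>i. min (\<alpha>g i \<omega>) (y i))" for \<omega>
    have Qm': "Q \<in> borel_measurable M" using Qm by (simp add: Q_def[abs_def])
    have Em: "cd.E \<in> sets M" by (rule cd.E_sets)
    have pw: "Q' \<omega> \<le> Q \<omega> * indicator (space M - cd.E) \<omega> + ennreal (2 * Dr) * indicator cd.E \<omega>"
      if sp: "\<omega> \<in> space M" for \<omega>
    proof (cases "\<omega> \<in> cd.E")
      case True
      have "Q' \<omega> \<le> 2 * D" unfolding Q'_def by (rule capped_le2D[OF n1 D_def])
      also have "2 * D = ennreal (2 * Dr)" using Dr by (simp add: ennreal_mult)
      finally show ?thesis using True by simp
    next
      case False
      then have "\<exists>i<n. tauv \<beta> (\<lambda>j. \<alpha>g j \<omega>) i < D" using sp Dr by (auto simp: cd.E_def not_le)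
      then have "Q' \<omega> = Q \<omega>" unfolding Q'_def Q_def by (rule capped_eq[OF n1 D_def])
      then show ?thesis using False sp by simp
    qed
    have m1: "(\<lambda>\<omega>. Q \<omega> * indicator (space M - cd.E) \<omega>) \<in> borel_measurable M" using Qm' Em by measurable
    have m2: "(\<lambda>\<omega>. Q \<omega> * indicator cd.E \<omega>) \<in> borel_measurable M" using Qm' Em by measurable
    have "(\<integral>\<^sup>+\<omega>. Q' \<omega> \<partial>M) \<le> (\<integral>\<^sup>+\<omega>. Q \<omega> * indicator (space M - cd.E) \<omega> + ennreal (2 * Dr) * indicator cd.E \<omega> \<partial>M)"
      by (rule nn_integral_mono) (rule pw)
    also have "\<dots> = (\<integral>\<^sup>+\<omega>. Q \<omega> * indicator (space M - cd.E) \<omega> \<partial>M) + ennreal (2 * Dr) * emeasure M cd.E"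
      using m1 Em by (simp add: nn_integral_add nn_integral_cmult_indicator)
    also have "\<dots> \<le> (\<integral>\<^sup>+\<omega>. Q \<omega> * indicator (space M - cd.E) \<omega> \<partial>M) + (\<integral>\<^sup>+\<omega>. Q \<omega> * indicator cd.E \<omega> \<partial>M)"
      using cd.key by (simp add: Q_def add_left_mono)
    also have "\<dots> = (\<integral>\<^sup>+\<omega>. Q \<omega> * indicator (space M - cd.E) \<omega> + Q \<omega> * indicator cd.E \<omega> \<partial>M)"
      using m1 m2 by (simp add: nn_integral_add)
    also have "\<dots> = (\<integral>\<^sup>+\<omega>. Q \<omega> \<partial>M)"
      by (rule nn_integral_cong) (auto simp: indicator_def)
    finally show ?thesis by (simp add: Q_def Q'_def)
  qed
qed

end



theorem lemma4p7:
  fixes M :: "'a measure" and n :: nat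
    and c v :: "nat \<Rightarrow> real"
    and lam_g lam_b :: "nat \<Rightarrow> real \<Rightarrow> real"
    and \<alpha>g \<alpha>b :: "nat \<Rightarrow> 'a \<Rightarrow> ennreal"
  assumes "prob_space M"
    and "n \<ge> 1"
    and "\<forall>i<n. c i > 0"
    and "\<forall>i<n. v i \<ge> 0"
    and "\<forall>i<n. rate_fun (lam_g i) \<and> rate_fun (lam_b i)"
    and "\<forall>\<tau>>0. (\<Sum>i<n. lam_g i \<tau>) \<le> 2 / \<tau>"
    and "\<forall>i<n. first_arrival_time M (lam_g i) (\<alpha>g i) \<and> first_arrival_time M (lam_b i) (\<alpha>b i)"
    and "prob_space.indep_vars M (\<lambda>_. borel)
           (\<lambda>(bad, i). if bad then \<alpha>b i else \<alpha>g i) (UNIV \<times> {..<n})"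
  shows "(\<integral>\<^sup>+ \<omega>. stop_Q n (\<lambda>i. c i + v i) (\<lambda>i. min (\<alpha>g i \<omega>) (\<alpha>b i \<omega>)) \<partial>M)
         \<le> (\<integral>\<^sup>+ \<omega>. stop_Q n (\<lambda>i. c i + v i) (\<lambda>i. \<alpha>g i \<omega>) \<partial>M)"
proof -
  interpret prob_space M by fact
  define \<beta> where "\<beta> i = c i + v i" for i
  define X where "X = (\<lambda>(bad, i). if bad then \<alpha>b i else \<alpha>g i)"
  have ind: "indep_vars (\<lambda>_. borel) X (UNIV \<times> {..<n})" using assms(8) by (simp add: X_def)
  have n1: "n \<ge> 1" by fact
  have \<beta>pos: "\<And>i. i < n \<Longrightarrow> \<beta> i > 0" using assms(3,4) by (auto simp: \<beta>_def add_pos_nonneg)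
  have mg: "\<And>i. i < n \<Longrightarrow> \<alpha>g i \<in> borel_measurable M" and mb: "\<And>i. i < n \<Longrightarrow> \<alpha>b i \<in> borel_measurable M"
    using assms(7) by (auto simp: first_arrival_time_def)
  have indepP: "prob (\<Inter>i\<in>{..<n}. \<alpha>g i -` B i \<inter> space M) = (\<Prod>i<n. prob (\<alpha>g i -` B i \<inter> space M))"
    if B: "\<And>i. i < n \<Longrightarrow> B i \<in> sets borel" for B
  proof -
    define J where "J = (\<lambda>i. (False, i)) ` {..<n}"
    have ne: "J \<noteq> {}" using n1 by (auto simp: J_def lessThan_empty_iff)
    have "prob (\<Inter>j\<in>J. X j -` (\<lambda>(b, i). B i) j \<inter> space M) = (\<Prod>j\<in>J. prob (X j -` (\<lambda>(b, i). B i) j \<inter> space M))"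
      using B by (intro indep_varsD[OF ind ne]) (auto simp: J_def)
    moreover have "(\<Inter>j\<in>J. X j -` (\<lambda>(b, i). B i) j \<inter> space M) = (\<Inter>i\<in>{..<n}. \<alpha>g i -` B i \<inter> space M)"
      by (auto simp: J_def X_def)
    moreover have "(\<Prod>j\<in>J. prob (X j -` (\<lambda>(b, i). B i) j \<inter> space M)) = (\<Prod>i<n. prob (\<alpha>g i -` B i \<inter> space M))"
    proof -
      have "inj_on (\<lambda>i. (False, i)) {..<n}" by (auto simp: inj_on_def)
      then show ?thesis unfolding J_def by (subst prod.reindex) (auto simp: X_def)
    qed
    ultimately show ?thesis by simp
  qed
  interpret core M n \<beta> lam_g \<alpha>g
  proof
    show "\<And>i. i < n \<Longrightarrow> rate_fun (lam_g i)" using assms(5) by auto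
    show "\<And>i. i < n \<Longrightarrow> first_arrival_time M (lam_g i) (\<alpha>g i)" using assms(7) by auto
    show "\<And>t. t > 0 \<Longrightarrow> (\<Sum>i<n. lam_g i t) \<le> 2 / t" using assms(6) by auto
  qed (use n1 \<beta>pos indepP in auto)
  define S where "S = (PiM ({False} \<times> {..<n}) (\<lambda>_. borel) :: (bool \<times> nat \<Rightarrow> ennreal) measure)"
  define T where "T = (PiM ({True} \<times> {..<n}) (\<lambda>_. borel) :: (bool \<times> nat \<Rightarrow> ennreal) measure)"
  define Gv where "Gv \<omega> = restrict (\<lambda>j. X j \<omega>) ({False} \<times> {..<n})" for \<omega>
  define Bv where "Bv \<omega> = restrict (\<lambda>j. X j \<omega>) ({True} \<times> {..<n})" for \<omega>
  have iv: "indep_var S Gv T Bv"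
    unfolding S_def T_def Gv_def Bv_def by (rule indep_var_restrict[OF ind]) auto
  then have rvG: "random_variable S Gv" and rvB: "random_variable T Bv"
    and deq: "distr M S Gv \<Otimes>\<^sub>M distr M T Bv = distr M (S \<Otimes>\<^sub>M T) (\<lambda>x. (Gv x, Bv x))"
    unfolding indep_var_distribution_eq by auto
  interpret PG: prob_space "distr M S Gv" by (rule prob_space_distr[OF rvG])
  interpret PB: prob_space "distr M T Bv" by (rule prob_space_distr[OF rvB])
  interpret P2: pair_prob_space "distr M S Gv" "distr M T Bv" ..
  define Fq where "Fq p = stop_Q n \<beta> (\<lambda>i. min (fst p (False, i)) (snd p (True, i)))" for p :: "(bool \<times> nat \<Rightarrow> ennreal) \<times> (bool \<times> nat \<Rightarrow> ennreal)"
  have Fqm: "Fq \<in> borel_measurable (S \<Otimes>\<^sub>M T)"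
    unfolding Fq_def[abs_def]
  proof (rule stop_Q_measurable[OF n1])
    fix i assume "i < n"
    then have [measurable]: "(False, i) \<in> {False} \<times> {..<n}" "(True, i) \<in> {True} \<times> {..<n}" by auto
    show "(\<lambda>p. min (fst p (False, i)) (snd p (True, i))) \<in> borel_measurable (S \<Otimes>\<^sub>M T)"
      unfolding S_def T_def by measurable
  qed
  define C where "C = (\<integral>\<^sup>+ \<omega>. stop_Q n \<beta> (\<lambda>i. \<alpha>g i \<omega>) \<partial>M)"
  have "(\<integral>\<^sup>+ \<omega>. stop_Q n \<beta> (\<lambda>i. min (\<alpha>g i \<omega>) (\<alpha>b i \<omega>)) \<partial>M) = (\<integral>\<^sup>+ \<omega>. Fq (Gv \<omega>, Bv \<omega>) \<partial>M)"
  proof (rule nn_integral_cong)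
    fix \<omega> show "stop_Q n \<beta> (\<lambda>i. min (\<alpha>g i \<omega>) (\<alpha>b i \<omega>)) = Fq (Gv \<omega>, Bv \<omega>)"
      unfolding Fq_def by (rule stop_Q_cong[OF _ n1]) (simp add: Gv_def Bv_def X_def)
  qed
  also have "\<dots> = (\<integral>\<^sup>+ p. Fq p \<partial>distr M (S \<Otimes>\<^sub>M T) (\<lambda>x. (Gv x, Bv x)))"
    by (rule nn_integral_distr[symmetric]) (use rvG rvB Fqm in \<open>auto intro: measurable_Pair\<close>)
  also have "\<dots> = (\<integral>\<^sup>+ p. Fq p \<partial>(distr M S Gv \<Otimes>\<^sub>M distr M T Bv))"
    by (simp add: deq)
  also have "\<dots> = (\<integral>\<^sup>+ b. (\<integral>\<^sup>+ g. Fq (g, b) \<partial>distr M S Gv) \<partial>distr M T Bv)"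
    by (rule P2.nn_integral_snd[symmetric]) (use Fqm in simp)
  also have "\<dots> \<le> (\<integral>\<^sup>+ b. C \<partial>distr M T Bv)"
  proof (rule nn_integral_mono)
    fix b :: "bool \<times> nat \<Rightarrow> ennreal"
    assume "b \<in> space (distr M T Bv)"
    have mFb: "(\<lambda>g. Fq (g, b)) \<in> borel_measurable S"
      unfolding Fq_def
    proof (rule stop_Q_measurable[OF n1])
      fix i assume "i < n"
      then have [measurable]: "(False, i) \<in> {False} \<times> {..<n}" by auto
      show "(\<lambda>g. min (fst (g, b) (False, i)) (snd (g, b) (True, i))) \<in> borel_measurable S"
        unfolding S_def by simp measurable
    qed
    have "(\<integral>\<^sup>+ g. Fq (g, b) \<partial>distr M S Gv) = (\<integral>\<^sup>+ \<omega>. Fq (Gv \<omega>, b) \<partial>M)"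
      by (rule nn_integral_distr[OF rvG]) (simp add: mFb)
    also have "\<dots> = (\<integral>\<^sup>+ \<omega>. stop_Q n \<beta> (\<lambda>i. min (\<alpha>g i \<omega>) (b (True, i))) \<partial>M)"
    proof (rule nn_integral_cong)
      fix \<omega> show "Fq (Gv \<omega>, b) = stop_Q n \<beta> (\<lambda>i. min (\<alpha>g i \<omega>) (b (True, i)))"
        unfolding Fq_def by (rule stop_Q_cong[OF _ n1]) (simp add: Gv_def X_def)
    qed
    also have "\<dots> \<le> C" unfolding C_def by (rule caps)
    finally show "(\<integral>\<^sup>+ g. Fq (g, b) \<partial>distr M S Gv) \<le> C" .
  qed
  also have "\<dots> = C"
    using PB.emeasure_space_1 by simp
  moreover have "\<beta> = (\<lambda>i. c i + v i)" by (simp add: \<beta>_def[abs_def])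
  ultimately show ?thesis by (simp add: C_def)
qed


end
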